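(* Let $A\in\mathbb{Z}^{d\times n}$, $\mathbf{b}\in\mathbb{Z}^d$, $\mathbf{c}\in\mathbb{Z}^n$, $\mathbf{u}\in\mathbb{Z}_{\ge0}^n$, and consider the LP $\min\{\mathbf{c}^\top\mathbf{x} : A\mathbf{x}=\mathbf{b},\ \mathbf{0}\le\mathbf{x}\le\mathbf{u},\ \mathbf{x}\in\mathbb{R}^n\}$. Let $m$ be the number of distinct positive values of $-\mathbf{c}^\top\mathbf{z}/\|\mathbf{z}\|_1$ as $\mathbf{z}$ ranges over $\mathcal{C}(A)$. Then from any feasible solution, every sequence of discrete steepest-descent augmentations reaches an optimal solution after at most $n\cdot m$ augmentations.
   Context: The circuits $\mathcal{C}(A)$: for each nonzero $\mathbf{z}\in\ker(A)$ with inclusion-minimal support among nonzero vectors of $\ker(A)$, the line $\mathbb{R}\mathbf{z}$ contains exactly two nonzero integer points closest to the origin; $\mathcal{C}(A)$ is the set of all these vectors. Discrete steepest-descent augmentation (LP): given a feasible $\mathbf{x}_k$, choose $\mathbf{z}\in\mathcal{C}(A)$ maximizing $-\mathbf{c}^\top\mathbf{z}/\|\mathbf{z}\|_1$ among all $\mathbf{z}\in\mathcal{C}(A)$ such that $\mathbf{x}_k+\epsilon\mathbf{z}$ is feasible for some $\epsilon>0$; if this maximum is positive, let $\alpha$ be the largest real number with $\mathbf{x}_k+\alpha\mathbf{z}$ feasible and set $\mathbf{x}_{k+1}:=\mathbf{x}_k+\alpha\mathbf{z}$, otherwise stop. *)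

theory Defs
  imports "HOL-Analysis.Analysis"
begin

text \<open>Vectors are indexed by finite types: 'n indexes the n variables, 'd the d constraints.
  Integer data are embedded into the reals via of_int.\<close>

definition realM :: "int^'n^'d \<Rightarrow> real^'n^'d" where
  "realM A = (\<chi> i j. real_of_int (A $ i $ j))"

definition realV :: "int^'n \<Rightarrow> real^'n" where
  "realV v = (\<chi> i. real_of_int (v $ i))"

definition kerA :: "int^'n^'d \<Rightarrow> (real^'n) set" where
  "kerA A = {z. realM A *v z = 0}"

definition supp :: "real^'n \<Rightarrow> 'n set" where
  "supp z = {i. z $ i \<noteq> 0}"

definition is_int_vec :: "real^'n \<Rightarrow> bool" where
  "is_int_vec z \<longleftrightarrow> (\<forall>i. z $ i \<in> \<int>)"

text \<open>Circuits: nonzero kernel vectors of inclusion-minimal support, normalised to be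
  the nonzero integer points of their line closest to the origin.\<close>
definition circuits :: "int^'n^'d \<Rightarrow> (real^'n) set" where
  "circuits A = {z. z \<in> kerA A \<and> z \<noteq> 0
      \<and> (\<forall>y\<in>kerA A. y \<noteq> 0 \<longrightarrow> \<not> (supp y \<subset> supp z))
      \<and> is_int_vec z
      \<and> (\<forall>t::real. is_int_vec (t *\<^sub>R z) \<and> t *\<^sub>R z \<noteq> 0 \<longrightarrow> norm z \<le> norm (t *\<^sub>R z))}"

definition l1norm :: "real^'n \<Rightarrow> real" where
  "l1norm z = (\<Sum>i\<in>UNIV. \<bar>z $ i\<bar>)"

definition cost :: "int^'n \<Rightarrow> real^'n \<Rightarrow> real" where
  "cost c x = (\<Sum>i\<in>UNIV. real_of_int (c $ i) * x $ i)"

definition ratio :: "int^'n \<Rightarrow> real^'n \<Rightarrow> real" where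
  "ratio c z = - cost c z / l1norm z"

definition feasible :: "int^'n^'d \<Rightarrow> int^'d \<Rightarrow> int^'n \<Rightarrow> real^'n \<Rightarrow> bool" where
  "feasible A b u x \<longleftrightarrow> realM A *v x = realV b
      \<and> (\<forall>i. 0 \<le> x $ i \<and> x $ i \<le> real_of_int (u $ i))"

definition optimal :: "int^'n^'d \<Rightarrow> int^'d \<Rightarrow> int^'n \<Rightarrow> int^'n \<Rightarrow> real^'n \<Rightarrow> bool" where
  "optimal A b c u x \<longleftrightarrow> feasible A b u x
      \<and> (\<forall>y. feasible A b u y \<longrightarrow> cost c x \<le> cost c y)"

definition feas_dirs :: "int^'n^'d \<Rightarrow> int^'d \<Rightarrow> int^'n \<Rightarrow> real^'n \<Rightarrow> (real^'n) set" where
  "feas_dirs A b u x = {z \<in> circuits A. \<exists>\<epsilon>>0. feasible A b u (x + \<epsilon> *\<^sub>R z)}"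

definition sd_step :: "int^'n^'d \<Rightarrow> int^'d \<Rightarrow> int^'n \<Rightarrow> int^'n \<Rightarrow> real^'n \<Rightarrow> real^'n \<Rightarrow> bool" where
  "sd_step A b c u x x' \<longleftrightarrow> (\<exists>z \<alpha>. z \<in> feas_dirs A b u x
      \<and> (\<forall>z'\<in>feas_dirs A b u x. ratio c z' \<le> ratio c z)
      \<and> ratio c z > 0
      \<and> feasible A b u (x + \<alpha> *\<^sub>R z)
      \<and> (\<forall>\<beta>::real. feasible A b u (x + \<beta> *\<^sub>R z) \<longrightarrow> \<beta> \<le> \<alpha>)
      \<and> x' = x + \<alpha> *\<^sub>R z)"

definition sd_stops :: "int^'n^'d \<Rightarrow> int^'d \<Rightarrow> int^'n \<Rightarrow> int^'n \<Rightarrow> real^'n \<Rightarrow> bool" where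
  "sd_stops A b c u x \<longleftrightarrow> (\<forall>z\<in>feas_dirs A b u x. ratio c z \<le> 0)"

definition num_pos_ratios :: "int^'n^'d \<Rightarrow> int^'n \<Rightarrow> nat" where
  "num_pos_ratios A c = card {r. r > 0 \<and> (\<exists>z\<in>circuits A. ratio c z = r)}"

end

theory Submission
  imports Defs
begin

definition conf :: "real^'n \<Rightarrow> real^'n \<Rightarrow> bool" where
  "conf h g \<longleftrightarrow> (\<forall>i. (0 < h$i \<longrightarrow> 0 < g$i) \<and> (h$i < 0 \<longrightarrow> g$i < 0))"

lemma conf_trans: "conf a b \<Longrightarrow> conf b c \<Longrightarrow> conf a c"
  unfolding conf_def by blast

lemma conf_supp: "conf h g \<Longrightarrow> supp h \<subseteq> supp g"
  unfolding conf_def supp_def by (auto simp: neq_iff)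

lemma conf_scale: "t > 0 \<Longrightarrow> conf h g \<Longrightarrow> conf (t *\<^sub>R h) g"
  unfolding conf_def by (auto simp: zero_less_mult_iff mult_less_0_iff)

lemma kerA_add: "x \<in> kerA A \<Longrightarrow> y \<in> kerA A \<Longrightarrow> x + y \<in> kerA A"
  by (simp add: kerA_def matrix_vector_right_distrib)
lemma kerA_diff: "x \<in> kerA A \<Longrightarrow> y \<in> kerA A \<Longrightarrow> x - y \<in> kerA A"
  by (simp add: kerA_def matrix_vector_mult_diff_distrib)
lemma kerA_scale: "x \<in> kerA A \<Longrightarrow> t *\<^sub>R x \<in> kerA A"
  by (simp add: kerA_def matrix_vector_mult_scaleR)
lemma feasible_diff: "feasible A b u x \<Longrightarrow> feasible A b u y \<Longrightarrow> y - x \<in> kerA A"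
  by (simp add: kerA_def feasible_def matrix_vector_mult_diff_distrib)

lemma nonzero_comp: "(x::real^'n) \<noteq> 0 \<Longrightarrow> \<exists>i. x$i \<noteq> 0" by (metis vec_eq_iff zero_index)

lemma cost_add: "cost c (x + y) = cost c x + cost c y"
  by (simp add: cost_def algebra_simps sum.distrib)
lemma cost_diff: "cost c (x - y) = cost c x - cost c y"
  by (simp add: cost_def algebra_simps sum_subtractf)
lemma cost_scale: "cost c (t *\<^sub>R x) = t * cost c x"
  by (simp add: cost_def sum_distrib_left algebra_simps)
lemma cost_zero[simp]: "cost c 0 = 0" by (simp add: cost_def)
lemma cost_sum: "finite J \<Longrightarrow> cost c (\<Sum>j\<in>J. f j) = (\<Sum>j\<in>J. cost c (f j))"
  by (induction J rule: finite_induct) (simp_all add: cost_add)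

lemma l1_nonneg: "0 \<le> l1norm x" by (simp add: l1norm_def sum_nonneg)
lemma l1_zero[simp]: "l1norm 0 = 0" by (simp add: l1norm_def)
lemma l1_pos: "x \<noteq> 0 \<Longrightarrow> 0 < l1norm x"
proof -
  assume "x \<noteq> 0"
  then obtain i where "x$i \<noteq> 0" using nonzero_comp by blast
  then have "0 < \<bar>x$i\<bar>" by simp
  also have "\<bar>x$i\<bar> \<le> l1norm x" unfolding l1norm_def
    by (rule member_le_sum) auto
  finally show ?thesis .
qed
lemma l1_scale: "l1norm (t *\<^sub>R x) = \<bar>t\<bar> * l1norm x"
  by (simp add: l1norm_def sum_distrib_left abs_mult)
lemma l1_add: "l1norm (x + y) \<le> l1norm x + l1norm y"
  unfolding l1norm_def by (simp add: sum.distrib[symmetric] sum_mono abs_triangle_ineq)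
lemma l1_sum: "finite J \<Longrightarrow> l1norm (\<Sum>j\<in>J. f j) \<le> (\<Sum>j\<in>J. l1norm (f j))"
proof (induction J rule: finite_induct)
  case (insert a F)
  then show ?case using l1_add[of "f a" "sum f F"] by simp
qed simp

lemma reduce_core:
  fixes h y :: "real^'n"
  assumes sub: "\<And>i. y$i \<noteq> 0 \<Longrightarrow> h$i \<noteq> 0"
    and i0: "y$i0 \<noteq> 0" "h$i0 / y$i0 > 0"
  shows "\<exists>t>0. conf (h - t *\<^sub>R y) h \<and> (\<exists>i. y$i \<noteq> 0 \<and> (h - t *\<^sub>R y)$i = 0)"
proof -
  define P where "P = {i. y$i \<noteq> 0 \<and> h$i / y$i > 0}"
  define t where "t = Min ((\<lambda>i. h$i / y$i) ` P)"
  have fin: "finite P" by simp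
  have ne: "P \<noteq> {}" using i0 by (auto simp: P_def)
  have tin: "t \<in> (\<lambda>i. h$i / y$i) ` P" unfolding t_def using fin ne by (intro Min_in) auto
  then obtain i1 where i1: "i1 \<in> P" "t = h$i1 / y$i1" by blast
  have tpos: "t > 0" using i1 by (auto simp: P_def)
  have tle: "t \<le> h$i / y$i" if "i \<in> P" for i
    unfolding t_def using fin that by (intro Min_le) auto
  have "conf (h - t *\<^sub>R y) h"
    unfolding conf_def
  proof (intro allI)
    fix i
    show "(0 < (h - t *\<^sub>R y) $ i \<longrightarrow> 0 < h $ i) \<and> ((h - t *\<^sub>R y) $ i < 0 \<longrightarrow> h $ i < 0)"
    proof (cases "y$i = 0")
      case True then show ?thesis by simp
    next
      case False
      then have hne: "h$i \<noteq> 0" using sub by blast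
      show ?thesis
      proof (cases "i \<in> P")
        case True
        then have r: "t \<le> h$i / y$i" and rp: "h$i / y$i > 0" using tle by (auto simp: P_def)
        show ?thesis
        proof (cases "y$i > 0")
          case True
          then have "t * y$i \<le> h$i" using r by (simp add: pos_le_divide_eq)
          moreover have "h$i > 0" using rp True by (simp add: zero_less_divide_iff)
          ultimately show ?thesis by simp
        next
          case f2: False
          then have yn: "y$i < 0" using False by simp
          then have "h$i \<le> t * y$i" using r by (simp add: neg_le_divide_eq)
          moreover have "h$i < 0" using rp yn by (simp add: zero_less_divide_iff)
          ultimately show ?thesis by simp
        qed
      next
        case nP: False
        then have "h$i / y$i \<le> 0" using False by (auto simp: P_def)
        then have "h$i / y$i < 0" using hne False by (simp add: order_le_less)
        then have "(h$i < 0 \<and> y$i > 0) \<or> (h$i > 0 \<and> y$i < 0)" by (auto simp: divide_less_0_iff)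
        then show ?thesis using tpos
          by (auto simp: mult_pos_pos mult_pos_neg) (smt (verit) mult_pos_pos, smt (verit) mult_pos_neg)
      qed
    qed
  qed
  moreover have "(h - t *\<^sub>R y)$i1 = 0" "y$i1 \<noteq> 0" using i1 by (auto simp: P_def)
  ultimately show ?thesis using tpos by blast
qed

lemma reduce:
  fixes h y :: "real^'n"
  assumes "y \<noteq> 0" "supp y \<subseteq> supp h"
  shows "\<exists>t. conf (h - t *\<^sub>R y) h \<and> (\<exists>i. y$i \<noteq> 0 \<and> (h - t *\<^sub>R y)$i = 0)"
proof -
  obtain i0 where i0: "y$i0 \<noteq> 0" using assms nonzero_comp by blast
  have sub: "\<And>i. y$i \<noteq> 0 \<Longrightarrow> h$i \<noteq> 0" using assms(2) by (auto simp: supp_def)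
  have "h$i0 \<noteq> 0" using sub i0 by blast
  then have "h$i0 / y$i0 > 0 \<or> h$i0 / (-y)$i0 > 0" using i0
    by (auto simp: neq_iff divide_less_0_iff zero_less_divide_iff)
  then show ?thesis
  proof
    assume "h$i0 / y$i0 > 0"
    then show ?thesis using reduce_core[OF sub i0] by blast
  next
    assume a: "h$i0 / (-y)$i0 > 0"
    have sub': "\<And>i. (-y)$i \<noteq> 0 \<Longrightarrow> h$i \<noteq> 0" using sub by simp
    obtain t where "conf (h - t *\<^sub>R (-y)) h" "\<exists>i. (-y)$i \<noteq> 0 \<and> (h - t *\<^sub>R (-y))$i = 0"
      using reduce_core[OF sub' _ a] i0 by auto
    then show ?thesis by (intro exI[of _ "-t"]) simp
  qed
qed


definition minsupp :: "int^'n^'d \<Rightarrow> real^'n \<Rightarrow> bool" where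
  "minsupp A h \<longleftrightarrow> h \<in> kerA A \<and> h \<noteq> 0 \<and> (\<forall>y\<in>kerA A. y \<noteq> 0 \<longrightarrow> \<not> supp y \<subset> supp h)"

lemma conf_minsupp:
  assumes g: "g \<in> kerA A" "g \<noteq> 0"
  shows "\<exists>h. minsupp A h \<and> conf h g"
proof -
  define Q where "Q h \<longleftrightarrow> h \<in> kerA A \<and> h \<noteq> 0 \<and> conf h g" for h
  have "Q g" using g by (simp add: Q_def conf_def)
  then obtain h where hQ: "Q h" and hmin: "\<And>h'. Q h' \<Longrightarrow> card (supp h) \<le> card (supp h')"
    using ex_has_least_nat[of Q g "\<lambda>h. card (supp h)"] by blast
  have "\<not> supp y \<subset> supp h" if y: "y \<in> kerA A" "y \<noteq> 0" for y
  proof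
    assume ps: "supp y \<subset> supp h"
    obtain t i where c: "conf (h - t *\<^sub>R y) h" and i: "y$i \<noteq> 0" "(h - t *\<^sub>R y)$i = 0"
      using reduce[OF y(2)] ps by blast
    define w where "w = h - t *\<^sub>R y"
    have wk: "w \<in> kerA A" using hQ y by (simp add: Q_def w_def kerA_diff kerA_scale)
    obtain j where j: "j \<in> supp h" "j \<notin> supp y" using ps by blast
    have "w$j = h$j" using j by (simp add: w_def supp_def)
    then have "w \<noteq> 0" using j by (auto simp: supp_def)
    moreover have "conf w g" using c hQ by (auto simp: Q_def w_def intro: conf_trans)
    ultimately have "Q w" using wk by (simp add: Q_def)
    moreover have "supp w \<subset> supp h"
    proof -
      have "supp w \<subseteq> supp h" using c conf_supp w_def by blast
      moreover have "i \<in> supp h" "i \<notin> supp w" using i ps by (auto simp: supp_def w_def)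
      ultimately show ?thesis by blast
    qed
    then have "card (supp w) < card (supp h)" by (simp add: psubset_card_mono)
    ultimately show False using hmin by fastforce
  qed
  then show ?thesis using hQ by (auto simp: minsupp_def Q_def)
qed

lemma minsupp_prop:
  assumes m: "minsupp A h" and y: "y \<in> kerA A" "supp y \<subseteq> supp h" and j: "h$j \<noteq> 0"
  shows "y = (y$j / h$j) *\<^sub>R h"
proof (rule ccontr)
  define w where "w = y - (y$j / h$j) *\<^sub>R h"
  assume "y \<noteq> (y$j / h$j) *\<^sub>R h"
  then have "w \<noteq> 0" by (simp add: w_def)
  moreover have "w \<in> kerA A" using m y by (simp add: w_def minsupp_def kerA_diff kerA_scale)
  moreover have "supp w \<subset> supp h"
  proof -
    have "supp w \<subseteq> supp h" using y(2) by (auto simp: supp_def w_def)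
    moreover have "w$j = 0" using j by (simp add: w_def)
    ultimately show ?thesis using j by (auto simp: supp_def)
  qed
  ultimately show False using m by (auto simp: minsupp_def)
qed

lemma rat_functional:
  "\<exists>\<phi> :: real \<Rightarrow> rat. (\<forall>x y. \<phi> (x+y) = \<phi> x + \<phi> y) \<and> (\<forall>q x. \<phi> (of_rat q * x) = q * \<phi> x) \<and> \<phi> 1 = 1"
proof -
  interpret vp: vector_space_pair "\<lambda>q x. of_rat q * (x::real)" "(*) :: rat\<Rightarrow>rat\<Rightarrow>rat"
    by unfold_locales (auto simp: algebra_simps of_rat_add of_rat_mult)
  have ind: "vp.vs1.independent {1::real}"
    by (simp add: vp.vs1.independent_insert vp.vs1.span_empty)
  define \<phi> where "\<phi> = vp.construct {1} (\<lambda>_. 1::rat)"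
  have lin: "Vector_Spaces.linear (\<lambda>q x. of_rat q * (x::real)) (*) \<phi>"
    unfolding \<phi>_def by (rule vp.linear_construct[OF ind])
  interpret l: Vector_Spaces.linear "\<lambda>q x. of_rat q * (x::real)" "(*) :: rat\<Rightarrow>rat\<Rightarrow>rat" \<phi> by (rule lin)
  have "\<phi> 1 = 1" unfolding \<phi>_def by (rule vp.construct_basis[OF ind]) simp
  then show ?thesis using l.add l.scale by blast
qed

lemma minsupp_rational:
  assumes m: "minsupp A h" and j: "h$j \<noteq> 0"
  shows "\<forall>i. h$i / h$j \<in> \<rat>"
proof -
  obtain \<phi> :: "real \<Rightarrow> rat" where add: "\<And>x y. \<phi> (x+y) = \<phi> x + \<phi> y"
    and sc: "\<And>q x. \<phi> (of_rat q * x) = q * \<phi> x" and one: "\<phi> 1 = 1"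
    using rat_functional by blast
  have z: "\<phi> 0 = 0" using add[of 0 0] by simp
  have sm: "\<phi> (\<Sum>l\<in>L. f l) = (\<Sum>l\<in>L. \<phi> (f l))" if "finite L" for L and f :: "'n \<Rightarrow> real"
    using that by (induction L rule: finite_induct) (simp_all add: z add)
  have si: "\<phi> (of_int a * x) = of_int a * \<phi> x" for a x
    using sc[of "of_int a" x] by simp
  define y where "y = (\<chi> i. real_of_rat (\<phi> (h$i / h$j)))"
  have yk: "y \<in> kerA A"
  proof -
    have "(realM A *v y)$r = 0" for r
    proof -
      have e1: "(realM A *v y)$r = (\<Sum>l\<in>UNIV. real_of_int (A$r$l) * real_of_rat (\<phi> (h$l / h$j)))"
        by (simp add: matrix_vector_mult_def realM_def y_def)
      have e2: "(\<Sum>l\<in>UNIV. real_of_int (A$r$l) * real_of_rat (\<phi> (h$l / h$j)))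
          = real_of_rat (\<Sum>l\<in>UNIV. of_int (A$r$l) * \<phi> (h$l / h$j))"
        by (simp add: of_rat_sum of_rat_mult)
      have e3: "(\<Sum>l\<in>UNIV. of_int (A$r$l) * \<phi> (h$l / h$j)) = \<phi> (\<Sum>l\<in>UNIV. of_int (A$r$l) * (h$l / h$j))"
        by (simp only: si sm[OF finite])
      have e4: "(\<Sum>l\<in>UNIV. of_int (A$r$l) * (h$l / h$j)) = (realM A *v h)$r / h$j"
        unfolding matrix_vector_mult_def realM_def vec_lambda_beta sum_divide_distrib by (rule sum.cong) auto
      have e5: "(realM A *v h)$r = 0" using m by (simp add: minsupp_def kerA_def)
      show ?thesis using e1 e2 e3 e4 e5 z by simp
    qed
    then show ?thesis by (simp add: kerA_def vec_eq_iff)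
  qed
  have ys: "supp y \<subseteq> supp h" by (auto simp: supp_def y_def z)
  have yj: "y$j = 1" by (simp add: y_def j one)
  have yeq: "y = (1 / h$j) *\<^sub>R h" using minsupp_prop[OF m yk ys j] unfolding yj .
  have "y$i = h$i / h$j" for i
  proof -
    have "y$i = ((1 / h$j) *\<^sub>R h)$i" using yeq by (rule arg_cong)
    then show ?thesis by simp
  qed
  moreover have "y$i \<in> \<rat>" for i by (simp add: y_def)
  ultimately show ?thesis by metis
qed


lemma rat_denom: "(x::real) \<in> \<rat> \<Longrightarrow> \<exists>N::int. N > 0 \<and> of_int N * x \<in> \<int>"
proof -
  assume "x \<in> \<rat>"
  then obtain a b :: int where "b > 0" "x = of_int a / of_int b" by (auto elim: Rats_cases')
  then show ?thesis by (intro exI[of _ b]) auto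
qed

lemma minsupp_circuit:
  fixes A :: "int^'n^'d" and h :: "real^'n"
  assumes m: "minsupp A h"
  shows "\<exists>t>0. t *\<^sub>R h \<in> circuits A"
proof -
  obtain j where j: "h$j \<noteq> 0" using m nonzero_comp unfolding minsupp_def by blast
  have q: "\<forall>i. h$i / h$j \<in> \<rat>" using minsupp_rational[OF m j] .
  have "\<forall>i. \<exists>N::int. N > 0 \<and> of_int N * (h$i / h$j) \<in> \<int>" using q rat_denom by blast
  then obtain Nf :: "'n \<Rightarrow> int" where Nf: "\<And>i. Nf i > 0 \<and> of_int (Nf i) * (h$i / h$j) \<in> \<int>" by metis
  define N where "N = (\<Prod>i\<in>UNIV. Nf i)"
  have Npos: "N > 0" unfolding N_def using Nf by (intro prod_pos) auto
  have Nint: "of_int N * (h$i / h$j) \<in> \<int>" for i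
  proof -
    have "N = Nf i * (\<Prod>k\<in>UNIV - {i}. Nf k)" unfolding N_def by (simp add: prod.remove)
    then have "of_int N * (h$i / h$j) = of_int (\<Prod>k\<in>UNIV - {i}. Nf k) * (of_int (Nf i) * (h$i / h$j))"
      by simp
    also have "\<dots> \<in> \<int>" using Nf[of i] by (metis Ints_mult Ints_of_int)
    finally show ?thesis .
  qed
  define T where "T = {t. is_int_vec (t *\<^sub>R h)}"
  have Tneg: "t \<in> T \<Longrightarrow> -t \<in> T" for t
    by (auto simp: T_def is_int_vec_def)
  define aj where "aj = \<bar>h$j\<bar>"
  have ajpos: "aj > 0" using j by (simp add: aj_def)
  have "of_int N / aj \<in> T"
  proof -
    have "(of_int N / aj) * h$i \<in> \<int>" for i
    proof (cases "h$j > 0")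
      case True
      then show ?thesis using Nint[of i] by (simp add: aj_def)
    next
      case False
      then have "(of_int N / aj) * h$i = - (of_int N * (h$i / h$j))" using j by (simp add: aj_def)
      then show ?thesis using Nint[of i] by simp
    qed
    then show ?thesis by (simp add: T_def is_int_vec_def)
  qed
  define K where "K = {k::nat. k > 0 \<and> real k / aj \<in> T}"
  have "nat N \<in> K" using \<open>of_int N / aj \<in> T\<close> Npos by (simp add: K_def)
  then obtain ks where ks: "ks \<in> K" and ksmin: "\<And>k. k \<in> K \<Longrightarrow> ks \<le> k"
    using ex_has_least_nat[of "\<lambda>k. k \<in> K" "nat N" "\<lambda>k. k"] by blast
  define ts where "ts = real ks / aj"
  have tsT: "ts \<in> T" and tspos: "ts > 0" using ks ajpos by (auto simp: K_def ts_def)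
  have tsmin: "ts \<le> t" if "t \<in> T" "t > 0" for t
  proof -
    have "t * h$j \<in> \<int>" using that by (simp add: T_def is_int_vec_def)
    then have "\<bar>t * h$j\<bar> \<in> \<int>" by (simp add: Ints_abs)
    then obtain n where n: "\<bar>t * h$j\<bar> = of_int n" by (auto elim: Ints_cases)
    have taj: "t * aj = \<bar>t * h$j\<bar>" using that by (simp add: aj_def abs_mult)
    have "n > 0" using n taj that ajpos by (smt (verit) mult_pos_pos of_int_le_0_iff)
    have "real (nat n) / aj = t" using n taj ajpos \<open>n > 0\<close> by (simp add: field_simps)
    then have "nat n \<in> K" using that \<open>n > 0\<close> by (simp add: K_def)
    then have "ks \<le> nat n" by (rule ksmin)
    then have "real ks / aj \<le> real (nat n) / aj" using ajpos by (simp add: divide_right_mono)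
    then show ?thesis using \<open>real (nat n) / aj = t\<close> by (simp add: ts_def)
  qed
  define z where "z = ts *\<^sub>R h"
  have zk: "z \<in> kerA A" using m by (simp add: z_def minsupp_def kerA_scale)
  have zne: "z \<noteq> 0" using m tspos by (simp add: z_def minsupp_def)
  have sz: "supp z = supp h" using tspos by (auto simp: z_def supp_def)
  have zmin: "\<forall>y\<in>kerA A. y \<noteq> 0 \<longrightarrow> \<not> supp y \<subset> supp z" using m sz by (simp add: minsupp_def)
  have zint: "is_int_vec z" using tsT by (simp add: T_def z_def)
  have znorm: "norm z \<le> norm (s *\<^sub>R z)" if "is_int_vec (s *\<^sub>R z) \<and> s *\<^sub>R z \<noteq> 0" for s
  proof -
    have "s * ts \<in> T" using that by (simp add: T_def z_def)
    then have "\<bar>s * ts\<bar> \<in> T" using Tneg by (cases "s * ts \<ge> 0") auto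
    moreover have "s \<noteq> 0" using that by auto
    ultimately have "ts \<le> \<bar>s * ts\<bar>" using tspos by (intro tsmin) auto
    then have "1 \<le> \<bar>s\<bar>" using tspos by (simp add: abs_mult)
    then show ?thesis by (simp add: mult_le_cancel_right1)
  qed
  have "z \<in> circuits A" unfolding circuits_def using zk zne zmin zint znorm by blast
  then show ?thesis using tspos z_def by blast
qed

lemma circuit_minsupp: "z \<in> circuits A \<Longrightarrow> minsupp A z"
  by (simp add: circuits_def minsupp_def)

lemma conf_circuit:
  assumes "g \<in> kerA A" "g \<noteq> 0"
  shows "\<exists>h\<in>circuits A. conf h g"
proof -
  obtain h where "minsupp A h" "conf h g" using conf_minsupp[OF assms] by blast
  moreover obtain t where "t > 0" "t *\<^sub>R h \<in> circuits A" using minsupp_circuit[OF \<open>minsupp A h\<close>] by blast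
  ultimately show ?thesis using conf_scale by blast
qed


lemma circuit_ker: "z \<in> circuits A \<Longrightarrow> z \<in> kerA A" by (simp add: circuits_def)
lemma circuit_ne: "z \<in> circuits A \<Longrightarrow> z \<noteq> 0" by (simp add: circuits_def)

lemma decomp:
  fixes A :: "int^'n^'d" and g :: "real^'n"
  assumes "g \<in> kerA A" "r \<ge> 0" "- cost c g > r * l1norm g"
  shows "\<exists>h\<in>circuits A. conf h g \<and> - cost c h > r * l1norm h"
  using assms
proof (induction "card (supp g)" arbitrary: g rule: less_induct)
  case less
  have gne: "g \<noteq> 0" using less.prems by auto
  obtain h where h: "h \<in> circuits A" "conf h g" using conf_circuit[OF less.prems(1) gne] by blast
  show ?case
  proof (cases "- cost c h > r * l1norm h")
    case True then show ?thesis using h by blast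
  next
    case False
    obtain i0 where i0: "h$i0 \<noteq> 0" using circuit_ne[OF h(1)] nonzero_comp by blast
    have sub: "\<And>i. h$i \<noteq> 0 \<Longrightarrow> g$i \<noteq> 0" using h(2) by (auto simp: conf_def neq_iff)
    have "g$i0 / h$i0 > 0" using h(2) i0 by (auto simp: conf_def neq_iff zero_less_divide_iff)
    then obtain t i where t: "t > 0" "conf (g - t *\<^sub>R h) g" "h$i \<noteq> 0" "(g - t *\<^sub>R h)$i = 0"
      using reduce_core[OF sub i0] by blast
    define w where "w = g - t *\<^sub>R h"
    have wk: "w \<in> kerA A" using less.prems(1) circuit_ker[OF h(1)] by (simp add: w_def kerA_diff kerA_scale)
    have l1w: "l1norm w = l1norm g - t * l1norm h"
    proof -
      have "\<bar>w$k\<bar> = \<bar>g$k\<bar> - t * \<bar>h$k\<bar>" for k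
      proof -
        have c1: "(0 < w$k \<longrightarrow> 0 < g$k) \<and> (w$k < 0 \<longrightarrow> g$k < 0)" using t(2) by (simp add: conf_def w_def)
        have c2: "(0 < h$k \<longrightarrow> 0 < g$k) \<and> (h$k < 0 \<longrightarrow> g$k < 0)" using h(2) by (simp add: conf_def)
        have "w$k = g$k - t * h$k" by (simp add: w_def)
        then show ?thesis using c1 c2 t(1)
          by (cases "g$k > 0"; cases "g$k < 0"; cases "h$k > 0"; cases "h$k < 0"; cases "w$k > 0"; cases "w$k < 0")
             (auto simp: abs_if zero_less_mult_iff mult_less_0_iff)
      qed
      then show ?thesis unfolding l1norm_def by (simp add: sum_subtractf sum_distrib_left)
    qed
    have cw: "cost c w = cost c g - t * cost c h" by (simp add: w_def cost_diff cost_scale)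
    have "- cost c w > r * l1norm w"
    proof -
      have "t * (- cost c h) \<le> t * (r * l1norm h)" using False t(1) by (intro mult_left_mono) auto
      moreover have "r * l1norm w = r * l1norm g - r * (t * l1norm h)" by (simp add: l1w algebra_simps)
      ultimately show ?thesis using less.prems(3) cw by (simp add: algebra_simps)
    qed
    moreover have "card (supp w) < card (supp g)"
    proof -
      have "supp w \<subseteq> supp g" using t(2) conf_supp w_def by blast
      moreover have "i \<in> supp g" "i \<notin> supp w" using t sub by (auto simp: supp_def w_def)
      ultimately have "supp w \<subset> supp g" by blast
      then show ?thesis by (simp add: psubset_card_mono)
    qed
    ultimately obtain h' where "h' \<in> circuits A" "conf h' w" "- cost c h' > r * l1norm h'"
      using less.hyps[OF _ wk less.prems(2)] by blast
    then show ?thesis using t(2) conf_trans w_def by blast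
  qed
qed

lemma dir_conf:
  assumes x: "feasible A b u x" and y: "feasible A b u y" and hk: "h \<in> kerA A"
    and c: "conf h (y - x)"
  shows "\<exists>\<epsilon>>0. feasible A b u (x + \<epsilon> *\<^sub>R h)"
proof -
  define g where "g = y - x"
  define e where "e = Min (insert 1 ((\<lambda>i. \<bar>g$i\<bar> / \<bar>h$i\<bar>) ` {i. h$i \<noteq> 0}))"
  have cg: "\<And>i. (0 < h$i \<longrightarrow> 0 < g$i) \<and> (h$i < 0 \<longrightarrow> g$i < 0)" using c by (simp add: conf_def g_def)
  have epos: "e > 0" unfolding e_def
  proof (subst Min_gr_iff)
    have "\<bar>g$i\<bar> / \<bar>h$i\<bar> > 0" if "h$i \<noteq> 0" for i
    proof -
      have "g$i \<noteq> 0" using cg[of i] that by (metis less_irrefl neq_iff)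
      then show ?thesis using that by simp
    qed
    then show "\<forall>a\<in>insert 1 ((\<lambda>i. \<bar>g$i\<bar> / \<bar>h$i\<bar>) ` {i. h$i \<noteq> 0}). 0 < a"
      by auto
  qed auto
  have ele: "e * \<bar>h$i\<bar> \<le> \<bar>g$i\<bar>" for i
  proof (cases "h$i = 0")
    case False
    have "e \<le> \<bar>g$i\<bar> / \<bar>h$i\<bar>" unfolding e_def using False by (intro Min_le) auto
    then show ?thesis using False by (simp add: pos_le_divide_eq)
  qed simp
  have "feasible A b u (x + e *\<^sub>R h)"
    unfolding feasible_def
  proof
    show "realM A *v (x + e *\<^sub>R h) = realV b" using x hk
      by (simp add: feasible_def kerA_def matrix_vector_right_distrib matrix_vector_mult_scaleR)
    show "\<forall>i. 0 \<le> (x + e *\<^sub>R h) $ i \<and> (x + e *\<^sub>R h) $ i \<le> real_of_int (u $ i)"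
    proof
      fix i
      have xi: "0 \<le> x$i" "x$i \<le> u$i" "0 \<le> y$i" "y$i \<le> u$i" using x y by (auto simp: feasible_def)
      have gi: "g$i = y$i - x$i" by (simp add: g_def)
      have m1: "h$i < 0 \<Longrightarrow> e * h$i < 0" "h$i > 0 \<Longrightarrow> e * h$i > 0" using epos
        by (simp_all add: mult_pos_neg)
      have "e * h$i \<ge> 0 \<and> e * h$i \<le> g$i \<or> e * h$i \<le> 0 \<and> e * h$i \<ge> g$i"
      proof -
        have "e * \<bar>h$i\<bar> = \<bar>e * h$i\<bar>" using epos by (simp add: abs_mult)
        then have "\<bar>e * h$i\<bar> \<le> \<bar>g$i\<bar>" using ele[of i] by simp
        moreover have "e * h$i = 0" if "h$i = 0" using that by simp
        ultimately show ?thesis using cg[of i] m1 by (smt (verit))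
      qed
      then show "0 \<le> (x + e *\<^sub>R h) $ i \<and> (x + e *\<^sub>R h) $ i \<le> real_of_int (u $ i)"
        using xi gi by auto
    qed
  qed
  then show ?thesis using epos by blast
qed

lemma better_dir:
  assumes x: "feasible A b u x" and y: "feasible A b u y" and r: "r \<ge> 0"
    and lt: "- cost c (y - x) > r * l1norm (y - x)"
  shows "\<exists>h\<in>feas_dirs A b u x. ratio c h > r"
proof -
  obtain h where h: "h \<in> circuits A" "conf h (y - x)" "- cost c h > r * l1norm h"
    using decomp[OF feasible_diff[OF x y] r lt] by blast
  obtain e where "e > 0" "feasible A b u (x + e *\<^sub>R h)"
    using dir_conf[OF x y circuit_ker[OF h(1)] h(2)] by blast
  then have "h \<in> feas_dirs A b u x" using h(1) by (auto simp: feas_dirs_def)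
  moreover have "ratio c h > r"
    using h(3) l1_pos[OF circuit_ne[OF h(1)]] unfolding ratio_def by (subst pos_less_divide_eq) auto
  ultimately show ?thesis by blast
qed


lemma abs_sum_eq:
  fixes a :: "'q \<Rightarrow> real"
  assumes "finite Q" "\<bar>\<Sum>q\<in>Q. a q\<bar> = (\<Sum>q\<in>Q. \<bar>a q\<bar>)"
  shows "(\<forall>q\<in>Q. a q \<ge> 0) \<or> (\<forall>q\<in>Q. a q \<le> 0)"
proof (cases "(\<Sum>q\<in>Q. a q) \<ge> 0")
  case True
  then have "(\<Sum>q\<in>Q. \<bar>a q\<bar> - a q) = 0" using assms(2) by (simp add: sum_subtractf)
  then have "\<forall>q\<in>Q. \<bar>a q\<bar> - a q = 0" using assms(1) by (subst (asm) sum_nonneg_eq_0_iff) auto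
  then show ?thesis by (auto simp: abs_if split: if_splits)
next
  case False
  then have "(\<Sum>q\<in>Q. \<bar>a q\<bar> + a q) = 0" using assms(2) by (simp add: sum.distrib)
  then have "\<forall>q\<in>Q. \<bar>a q\<bar> + a q = 0" using assms(1) by (subst (asm) sum_nonneg_eq_0_iff) auto
  then have "a q \<le> 0" if "q \<in> Q" for q using that abs_ge_self[of "a q"] by fastforce
  then show ?thesis by blast
qed

lemma ratio_circ: assumes "z \<in> circuits A" shows "- cost c z = ratio c z * l1norm z"
proof -
  have "l1norm z > 0" using l1_pos[OF circuit_ne[OF assms]] .
  then show ?thesis by (simp add: ratio_def)
qed

lemma ratio_scale_pos: "s > 0 \<Longrightarrow> ratio c (s *\<^sub>R z) = ratio c z"
  by (simp add: ratio_def cost_scale l1_scale)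
lemma ratio_scale_neg: "s < 0 \<Longrightarrow> ratio c (s *\<^sub>R z) = - ratio c z"
  by (simp add: ratio_def cost_scale l1_scale)

lemma pos_ratio_unique:
  assumes z: "z \<in> circuits A" and z': "z' \<in> circuits A" and s: "supp z' = supp z"
    and p: "ratio c z > 0" "ratio c z' > 0"
  shows "ratio c z' = ratio c z"
proof -
  obtain j where j: "z$j \<noteq> 0" using circuit_ne[OF z] nonzero_comp by blast
  have eq: "z' = (z'$j / z$j) *\<^sub>R z"
    using minsupp_prop[OF circuit_minsupp[OF z] circuit_ker[OF z'] _ j] s by simp
  define t where "t = z'$j / z$j"
  have "t \<noteq> 0" using eq circuit_ne[OF z'] t_def by auto
  then show ?thesis
  proof (cases "t > 0")
    case True then show ?thesis using eq ratio_scale_pos t_def by metis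
  next
    case False
    then have "t < 0" using \<open>t \<noteq> 0\<close> by simp
    then have "ratio c z' = - ratio c z" using eq ratio_scale_neg t_def by metis
    then show ?thesis using p by simp
  qed
qed

lemma finite_pos_ratios:
  fixes A :: "int^'n^'d" and c :: "int^'n"
  shows "finite {r. r > 0 \<and> (\<exists>z\<in>circuits A. ratio c z = r)}"
proof -
  define f where "f T = (SOME r. r > 0 \<and> (\<exists>z\<in>circuits A. supp z = T \<and> ratio c z = r))" for T
  have "{r. r > 0 \<and> (\<exists>z\<in>circuits A. ratio c z = r)} \<subseteq> f ` UNIV"
  proof
    fix r assume "r \<in> {r. r > 0 \<and> (\<exists>z\<in>circuits A. ratio c z = r)}"
    then obtain z where z: "z \<in> circuits A" "ratio c z = r" "r > 0" by blast
    have "f (supp z) = r" unfolding f_def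
    proof (rule someI2)
      show "r > 0 \<and> (\<exists>z'\<in>circuits A. supp z' = supp z \<and> ratio c z' = r)" using z by blast
    next
      fix r' assume "r' > 0 \<and> (\<exists>z'\<in>circuits A. supp z' = supp z \<and> ratio c z' = r')"
      then obtain z' where "z' \<in> circuits A" "supp z' = supp z" "ratio c z' = r'" "r' > 0" by blast
      then show "r' = r" using pos_ratio_unique[OF z(1), of z' c] z by simp
    qed
    then show "r \<in> f ` UNIV" using image_eqI[of r f "supp z" UNIV] by simp
  qed
  then show ?thesis by (rule finite_subset) simp
qed

lemma step_hit:
  assumes x': "feasible A b u x'" and zk: "z \<in> kerA A" and zne: "z \<noteq> 0"
    and mx: "\<forall>\<beta>::real. feasible A b u (x + \<beta> *\<^sub>R z) \<longrightarrow> \<beta> \<le> \<alpha>" and xe: "x' = x + \<alpha> *\<^sub>R z"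
  shows "\<exists>i. z$i \<noteq> 0 \<and> (z$i > 0 \<longrightarrow> x'$i = u$i) \<and> (z$i < 0 \<longrightarrow> x'$i = 0)"
proof (rule ccontr)
  assume na: "\<not> ?thesis"
  have fx: "0 \<le> x'$i" "x'$i \<le> u$i" for i using x' by (auto simp: feasible_def)
  have up: "x'$i < u$i" if zp: "z$i > 0" for i
  proof -
    have "x'$i \<noteq> u$i"
    proof
      assume "x'$i = u$i"
      then have "z$i \<noteq> 0 \<and> (z$i > 0 \<longrightarrow> x'$i = u$i) \<and> (z$i < 0 \<longrightarrow> x'$i = 0)" using zp by simp
      then show False using na by blast
    qed
    then show ?thesis using fx[of i] by simp
  qed
  have lo: "x'$i > 0" if zp: "z$i < 0" for i
  proof -
    have "x'$i \<noteq> 0"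
    proof
      assume "x'$i = 0"
      then have "z$i \<noteq> 0 \<and> (z$i > 0 \<longrightarrow> x'$i = u$i) \<and> (z$i < 0 \<longrightarrow> x'$i = 0)" using zp by simp
      then show False using na by blast
    qed
    then show ?thesis using fx[of i] by simp
  qed
  define s where "s i = (if z$i > 0 then (u$i - x'$i) / z$i else x'$i / (- z$i))" for i
  have spos: "s i > 0" if "i \<in> supp z" for i
    using that up[of i] lo[of i] by (auto simp: s_def supp_def neq_iff divide_pos_neg)
  define d where "d = Min (s ` supp z)"
  have ne: "supp z \<noteq> {}" using zne nonzero_comp by (auto simp: supp_def)
  have dpos: "d > 0" unfolding d_def using ne spos by (subst Min_gr_iff) auto
  have dle: "d \<le> s i" if "i \<in> supp z" for i unfolding d_def using that by (intro Min_le) auto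
  have "feasible A b u (x' + d *\<^sub>R z)"
    unfolding feasible_def
  proof
    show "realM A *v (x' + d *\<^sub>R z) = realV b" using x' zk
      by (simp add: feasible_def kerA_def matrix_vector_right_distrib matrix_vector_mult_scaleR)
    show "\<forall>i. 0 \<le> (x' + d *\<^sub>R z) $ i \<and> (x' + d *\<^sub>R z) $ i \<le> real_of_int (u $ i)"
    proof
      fix i
      show "0 \<le> (x' + d *\<^sub>R z) $ i \<and> (x' + d *\<^sub>R z) $ i \<le> real_of_int (u $ i)"
      proof (cases "z$i = 0")
        case True then show ?thesis using fx[of i] by simp
      next
        case False
        then have iz: "i \<in> supp z" by (simp add: supp_def)
        show ?thesis
        proof (cases "z$i > 0")
          case True
          have "d \<le> (u$i - x'$i) / z$i" using dle[OF iz] True by (simp add: s_def)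
          then have "d * z$i \<le> u$i - x'$i" using True by (simp add: le_divide_eq)
          moreover have "d * z$i > 0" using True dpos by simp
          ultimately show ?thesis using fx[of i] by simp
        next
          case f2: False
          then have zn: "z$i < 0" using False by simp
          have si: "s i = x'$i / (- z$i)" using f2 by (simp only: s_def if_False)
          have mz: "- z$i > 0" using zn by simp
          have "d * (- z$i) \<le> x'$i" using dle[OF iz] pos_le_divide_eq[OF mz, of d "x'$i"] unfolding si by blast
          moreover have "d * z$i < 0" using zn dpos by (simp add: mult_pos_neg)
          ultimately show ?thesis using fx[of i] by (simp add: algebra_simps)
        qed
      qed
    qed
  qed
  moreover have "x' + d *\<^sub>R z = x + (\<alpha> + d) *\<^sub>R z" by (simp add: xe scaleR_add_left)
  ultimately have "feasible A b u (x + (\<alpha> + d) *\<^sub>R z)" by simp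
  then have "\<alpha> + d \<le> \<alpha>" using mx by blast
  then show False using dpos by simp
qed

lemma no_better:
  assumes x: "feasible A b u x" and z: "z \<in> feas_dirs A b u x"
    and mx: "\<forall>z'\<in>feas_dirs A b u x. ratio c z' \<le> ratio c z" and rp: "ratio c z > 0"
    and y: "feasible A b u y"
  shows "- cost c (y - x) \<le> ratio c z * l1norm (y - x)"
proof (rule ccontr)
  assume "\<not> ?thesis"
  then obtain h where "h \<in> feas_dirs A b u x" "ratio c h > ratio c z"
    using better_dir[OF x y, of "ratio c z" c] rp by force
  then show False using mx by force
qed


theorem corollary2:
  fixes A :: "int^'n^'d" and b :: "int^'d" and c u :: "int^'n"
    and xs :: "nat \<Rightarrow> real^'n" and k :: nat
  assumes "\<forall>i. 0 \<le> u $ i"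
    and "feasible A b u (xs 0)"
    and "\<forall>j<k. sd_step A b c u (xs j) (xs (Suc j))"
  shows "k \<le> CARD('n) * num_pos_ratios A c
         \<and> (sd_stops A b c u (xs k) \<longrightarrow> optimal A b c u (xs k))"
proof -
  have "\<forall>j. \<exists>z \<alpha>. j < k \<longrightarrow> (z \<in> feas_dirs A b u (xs j)
      \<and> (\<forall>z'\<in>feas_dirs A b u (xs j). ratio c z' \<le> ratio c z)
      \<and> ratio c z > 0
      \<and> feasible A b u (xs j + \<alpha> *\<^sub>R z)
      \<and> (\<forall>\<beta>::real. feasible A b u (xs j + \<beta> *\<^sub>R z) \<longrightarrow> \<beta> \<le> \<alpha>)
      \<and> xs (Suc j) = xs j + \<alpha> *\<^sub>R z)"
    using assms(3) unfolding sd_step_def by blast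
  then obtain Z Al where ZA: "\<And>j. j < k \<Longrightarrow> (Z j \<in> feas_dirs A b u (xs j)
      \<and> (\<forall>z'\<in>feas_dirs A b u (xs j). ratio c z' \<le> ratio c (Z j))
      \<and> ratio c (Z j) > 0
      \<and> feasible A b u (xs j + Al j *\<^sub>R Z j)
      \<and> (\<forall>\<beta>::real. feasible A b u (xs j + \<beta> *\<^sub>R Z j) \<longrightarrow> \<beta> \<le> Al j)
      \<and> xs (Suc j) = xs j + Al j *\<^sub>R Z j)"
    by metis
  have FZ: "\<And>j. j < k \<Longrightarrow> Z j \<in> feas_dirs A b u (xs j)" using ZA by blast
  have MX: "\<And>j. j < k \<Longrightarrow> \<forall>z'\<in>feas_dirs A b u (xs j). ratio c z' \<le> ratio c (Z j)" using ZA by blast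
  have RP: "\<And>j. j < k \<Longrightarrow> ratio c (Z j) > 0" using ZA by blast
  have MXA: "\<And>j. j < k \<Longrightarrow> (\<forall>\<beta>::real. feasible A b u (xs j + \<beta> *\<^sub>R Z j) \<longrightarrow> \<beta> \<le> Al j)" using ZA by blast
  have XS: "\<And>j. j < k \<Longrightarrow> xs (Suc j) = xs j + Al j *\<^sub>R Z j" using ZA by blast
  have XF: "\<And>j. j < k \<Longrightarrow> feasible A b u (xs (Suc j))" using ZA by metis
  have CZ: "\<And>j. j < k \<Longrightarrow> Z j \<in> circuits A" using FZ by (simp add: feas_dirs_def)
  have feas: "\<And>j. j \<le> k \<Longrightarrow> feasible A b u (xs j)"
  proof -
    fix j assume "j \<le> k" then show "feasible A b u (xs j)"
      by (cases j) (auto simp: assms(2) XF)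
  qed
  have AP: "Al j > 0" if j: "j < k" for j
  proof -
    obtain e where "e > 0" "feasible A b u (xs j + e *\<^sub>R Z j)" using FZ[OF j] by (auto simp: feas_dirs_def)
    then show ?thesis using MXA[OF j] by force
  qed
  have HIT: "\<exists>i. Z j $ i \<noteq> 0 \<and> (Z j $ i > 0 \<longrightarrow> xs (Suc j) $ i = u$i) \<and> (Z j $ i < 0 \<longrightarrow> xs (Suc j) $ i = 0)"
    if j: "j < k" for j
    using step_hit[OF XF[OF j] circuit_ker[OF CZ[OF j]] circuit_ne[OF CZ[OF j]] MXA[OF j] XS[OF j]] .
  define r where "r j = ratio c (Z j)" for j
  have RC: "- cost c (Z j) = r j * l1norm (Z j)" if "j < k" for j
    using ratio_circ[OF CZ[OF that]] by (simp add: r_def)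
  have mono1: "r (Suc j) \<le> r j" if j: "Suc j < k" for j
  proof (rule ccontr)
    assume "\<not> ?thesis"
    then have gt: "r (Suc j) > r j" by simp
    have j': "j < k" using j by simp
    obtain d where d: "d > 0" "feasible A b u (xs (Suc j) + d *\<^sub>R Z (Suc j))"
      using FZ[OF j] by (auto simp: feas_dirs_def)
    define y where "y = xs (Suc j) + d *\<^sub>R Z (Suc j)"
    have yx: "y - xs j = Al j *\<^sub>R Z j + d *\<^sub>R Z (Suc j)" using XS[OF j'] by (simp add: y_def)
    have nb: "- cost c (y - xs j) \<le> r j * l1norm (y - xs j)"
      using no_better[OF feas[of j] FZ[OF j'] MX[OF j'] RP[OF j'] d(2)[folded y_def]] j by (simp add: r_def)
    have "- cost c (y - xs j) = Al j * (r j * l1norm (Z j)) + d * (r (Suc j) * l1norm (Z (Suc j)))"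
    proof -
      have e: "cost c (y - xs j) = Al j * cost c (Z j) + d * cost c (Z (Suc j))"
        unfolding yx by (simp add: cost_add cost_scale)
      have c1: "cost c (Z j) = - (r j * l1norm (Z j))" using RC[OF j'] by linarith
      have c2: "cost c (Z (Suc j)) = - (r (Suc j) * l1norm (Z (Suc j)))" using RC[OF j] by linarith
      show ?thesis unfolding e c1 c2 by (simp add: algebra_simps)
    qed
    moreover have "d * (r (Suc j) * l1norm (Z (Suc j))) > d * (r j * l1norm (Z (Suc j)))"
      using gt d(1) l1_pos[OF circuit_ne[OF CZ[OF j]]] by simp
    moreover have "l1norm (y - xs j) \<le> Al j * l1norm (Z j) + d * l1norm (Z (Suc j))"
      using l1_add[of "Al j *\<^sub>R Z j" "d *\<^sub>R Z (Suc j)"] AP[OF j'] d(1) by (simp add: yx l1_scale)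
    moreover have "r j > 0" using RP[OF j'] by (simp add: r_def)
    ultimately have "- cost c (y - xs j) > r j * l1norm (y - xs j)"
    proof -
      assume a1: "- cost c (y - xs j) = Al j * (r j * l1norm (Z j)) + d * (r (Suc j) * l1norm (Z (Suc j)))"
        and a2: "d * (r (Suc j) * l1norm (Z (Suc j))) > d * (r j * l1norm (Z (Suc j)))"
        and a3: "l1norm (y - xs j) \<le> Al j * l1norm (Z j) + d * l1norm (Z (Suc j))"
        and a4: "r j > 0"
      have "r j * l1norm (y - xs j) \<le> r j * (Al j * l1norm (Z j) + d * l1norm (Z (Suc j)))"
        using a3 a4 by (intro mult_left_mono) auto
      then show ?thesis using a1 a2 by (simp add: algebra_simps)
    qed
    then show False using nb by simp
  qed
  have chain: "r j \<le> r i" if "i \<le> j" "j < k" for i j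
    using that
  proof (induction j rule: dec_induct)
    case base then show ?case by simp
  next
    case (step m) then show ?case using mono1[of m] by simp
  qed
  have psum: "xs m = xs l + (\<Sum>q\<in>{l..<m}. Al q *\<^sub>R Z q)" if "l \<le> m" "m \<le> k" for l m
    using that
  proof (induction m rule: dec_induct)
    case base then show ?case by simp
  next
    case (step m) then show ?case using XS[of m] by simp
  qed
  have run: "p \<le> CARD('n)" if ap: "a + p \<le> k" and eqr: "\<forall>j\<in>{a..<a+p}. r j = \<rho>" for a p \<rho>
  proof (cases "p = 0")
    case True then show ?thesis by simp
  next
    case False
    define Q where "Q = {a..<a+p}"
    have aQ: "a \<in> Q" using False by (simp add: Q_def)
    have Qk: "q \<in> Q \<Longrightarrow> q < k" for q using ap by (auto simp: Q_def)
    have rho: "\<rho> = r a" using eqr aQ Q_def by simp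
    have rhopos: "\<rho> > 0" using RP[OF Qk[OF aQ]] rho by (simp add: r_def)
    define D where "D = (\<Sum>q\<in>Q. Al q *\<^sub>R Z q)"
    have Dx: "xs (a+p) - xs a = D" using psum[of a "a+p"] ap by (simp add: D_def Q_def)
    have cD: "- cost c D = \<rho> * (\<Sum>q\<in>Q. Al q * l1norm (Z q))"
    proof -
      have "- cost c D = (\<Sum>q\<in>Q. Al q * (- cost c (Z q)))"
        unfolding D_def by (subst cost_sum) (auto simp: Q_def cost_scale sum_negf)
      also have "\<dots> = (\<Sum>q\<in>Q. \<rho> * (Al q * l1norm (Z q)))"
        using RC Qk eqr by (intro sum.cong) (auto simp: Q_def)
      finally show ?thesis by (simp add: sum_distrib_left)
    qed
    have nb: "- cost c D \<le> \<rho> * l1norm D"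
      using no_better[OF feas[of a] FZ[OF Qk[OF aQ]] MX[OF Qk[OF aQ]] RP[OF Qk[OF aQ]] feas[of "a+p"]] ap Dx rho
      by (simp add: r_def)
    have le1: "(\<Sum>q\<in>Q. Al q * l1norm (Z q)) \<le> l1norm D"
      using nb cD rhopos by simp
    have le2: "l1norm D \<le> (\<Sum>q\<in>Q. Al q * l1norm (Z q))"
    proof -
      have "l1norm D \<le> (\<Sum>q\<in>Q. l1norm (Al q *\<^sub>R Z q))" unfolding D_def by (rule l1_sum) (simp add: Q_def)
      also have "\<dots> = (\<Sum>q\<in>Q. Al q * l1norm (Z q))"
        using AP Qk by (intro sum.cong) (force simp: l1_scale)+
      finally show ?thesis .
    qed
    have eq: "(\<Sum>i\<in>UNIV. \<bar>\<Sum>q\<in>Q. Al q * Z q $ i\<bar>) = (\<Sum>i\<in>UNIV. \<Sum>q\<in>Q. \<bar>Al q * Z q $ i\<bar>)"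
    proof -
      have "l1norm D = (\<Sum>i\<in>UNIV. \<bar>\<Sum>q\<in>Q. Al q * Z q $ i\<bar>)"
        by (simp add: l1norm_def D_def sum_component)
      moreover have "(\<Sum>q\<in>Q. Al q * l1norm (Z q)) = (\<Sum>i\<in>UNIV. \<Sum>q\<in>Q. \<bar>Al q * Z q $ i\<bar>)"
      proof -
        have "(\<Sum>q\<in>Q. Al q * l1norm (Z q)) = (\<Sum>q\<in>Q. \<Sum>i\<in>UNIV. \<bar>Al q * Z q $ i\<bar>)"
        proof (rule sum.cong[OF refl])
          fix q assume "q \<in> Q" then have "\<bar>Al q\<bar> = Al q" using AP Qk by force
          then show "Al q * l1norm (Z q) = (\<Sum>i\<in>UNIV. \<bar>Al q * Z q $ i\<bar>)"
            by (simp add: l1norm_def sum_distrib_left abs_mult)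
        qed
        then show ?thesis by (simp add: sum.swap[of _ Q])
      qed
      ultimately show ?thesis using le1 le2 by simp
    qed
    have coord: "\<bar>\<Sum>q\<in>Q. Al q * Z q $ i\<bar> = (\<Sum>q\<in>Q. \<bar>Al q * Z q $ i\<bar>)" for i
      by (rule sum_mono_inv[OF eq]) (auto intro: sum_abs)
    have sgn: "(\<forall>q\<in>Q. Z q $ i \<ge> 0) \<or> (\<forall>q\<in>Q. Z q $ i \<le> 0)" for i
    proof -
      have "(\<forall>q\<in>Q. Al q * Z q $ i \<ge> 0) \<or> (\<forall>q\<in>Q. Al q * Z q $ i \<le> 0)"
        by (rule abs_sum_eq[OF _ coord]) (simp add: Q_def)
      moreover have "\<And>q. q \<in> Q \<Longrightarrow> Al q > 0" using AP Qk by blast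
      ultimately show ?thesis
      proof (elim disjE)
        assume h: "\<forall>q\<in>Q. Al q * Z q $ i \<ge> 0" and alp: "\<And>q. q \<in> Q \<Longrightarrow> Al q > 0"
        have "Z q $ i \<ge> 0" if "q \<in> Q" for q using h[rule_format, OF that] alp[OF that] by (simp add: zero_le_mult_iff)
        then show ?thesis by blast
      next
        assume h: "\<forall>q\<in>Q. Al q * Z q $ i \<le> 0" and alp: "\<And>q. q \<in> Q \<Longrightarrow> Al q > 0"
        have "Z q $ i \<le> 0" if "q \<in> Q" for q using h[rule_format, OF that] alp[OF that] by (simp add: mult_le_0_iff)
        then show ?thesis by blast
      qed
    qed
    define hit where "hit j = (SOME i. Z j $ i \<noteq> 0 \<and> (Z j $ i > 0 \<longrightarrow> xs (Suc j) $ i = u$i) \<and> (Z j $ i < 0 \<longrightarrow> xs (Suc j) $ i = 0))" for j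
    have hitP: "Z j $ hit j \<noteq> 0 \<and> (Z j $ hit j > 0 \<longrightarrow> xs (Suc j) $ hit j = u$hit j) \<and> (Z j $ hit j < 0 \<longrightarrow> xs (Suc j) $ hit j = 0)"
      if "j < k" for j
      unfolding hit_def using someI_ex[OF HIT[OF that]] .
    have later0: "Z q' $ hit q = 0" if qq: "q \<in> Q" "q' \<in> Q" "q < q'" for q q'
    proof (rule ccontr)
      assume nz: "Z q' $ hit q \<noteq> 0"
      define i where "i = hit q"
      have q'k: "Suc q' \<le> k" using Qk[OF qq(2)] by simp
      have ps: "xs (Suc q') = xs (Suc q) + (\<Sum>l\<in>{Suc q..<Suc q'}. Al l *\<^sub>R Z l)"
        using psum[of "Suc q" "Suc q'"] qq q'k by simp
      have sub: "{Suc q..<Suc q'} \<subseteq> Q" using qq by (auto simp: Q_def)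
      have fx: "0 \<le> xs (Suc q') $ i" "xs (Suc q') $ i \<le> u$i" using feas[OF q'k] by (auto simp: feasible_def)
      have comp: "xs (Suc q') $ i = xs (Suc q) $ i + (\<Sum>l\<in>{Suc q..<Suc q'}. Al l * Z l $ i)"
        using ps by (simp add: sum_component)
      have q'in: "q' \<in> {Suc q..<Suc q'}" using qq by simp
      have hq: "Z q $ i \<noteq> 0" "Z q $ i > 0 \<longrightarrow> xs (Suc q) $ i = u$i" "Z q $ i < 0 \<longrightarrow> xs (Suc q) $ i = 0"
        using hitP[OF Qk[OF qq(1)]] by (auto simp: i_def)
      have alq: "Al l > 0" if "l \<in> {Suc q..<Suc q'}" for l using AP Qk sub that by blast
      show False
      proof (cases "Z q $ i > 0")
        case True
        then have allp: "\<forall>l\<in>Q. Z l $ i \<ge> 0" using sgn[of i] qq(1) by force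
        then have z'p: "Z q' $ i > 0" using nz qq(2) i_def by force
        have "Al q' * Z q' $ i \<le> (\<Sum>l\<in>{Suc q..<Suc q'}. Al l * Z l $ i)"
        proof -
          have nn: "\<forall>l\<in>{Suc q..<Suc q'}. 0 \<le> Al l * Z l $ i"
            using allp sub alq by (meson less_imp_le mult_nonneg_nonneg subsetD)
          show ?thesis by (rule member_le_sum[OF q'in]) (use nn in auto)
        qed
        moreover have "Al q' * Z q' $ i > 0" using z'p alq[OF q'in] by simp
        ultimately show False using comp fx hq(2) True by simp
      next
        case False
        then have neg: "Z q $ i < 0" using hq(1) by simp
        then have alln: "\<forall>l\<in>Q. Z l $ i \<le> 0" using sgn[of i] qq(1) by force
        then have z'n: "Z q' $ i < 0" using nz qq(2) i_def by force
        have "(\<Sum>l\<in>{Suc q..<Suc q'}. Al l * Z l $ i) \<le> Al q' * Z q' $ i"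
        proof -
          have "(\<Sum>l\<in>{Suc q..<Suc q'}. - (Al l * Z l $ i)) \<ge> - (Al q' * Z q' $ i)"
          proof -
            have nn: "\<forall>l\<in>{Suc q..<Suc q'}. 0 \<le> - (Al l * Z l $ i)"
              using alln sub alq by (meson less_imp_le mult_nonneg_nonpos neg_0_le_iff_le subsetD)
            show ?thesis by (rule member_le_sum[OF q'in]) (use nn in auto)
          qed
          then show ?thesis by (simp add: sum_negf)
        qed
        moreover have "Al q' * Z q' $ i < 0" using z'n alq[OF q'in] by (simp add: mult_pos_neg)
        ultimately show False using comp fx hq(3) neg by simp
      qed
    qed
    have "inj_on hit Q"
    proof (rule inj_onI)
      fix q q' assume qq: "q \<in> Q" "q' \<in> Q" "hit q = hit q'"
      show "q = q'"
      proof (rule ccontr)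
        assume "q \<noteq> q'"
        then have "q < q' \<or> q' < q" by auto
        then show False
        proof
          assume "q < q'"
          then have "Z q' $ hit q = 0" using later0 qq by blast
          then show False using hitP[OF Qk[OF qq(2)]] qq(3) by simp
        next
          assume "q' < q"
          then have "Z q $ hit q' = 0" using later0 qq by blast
          then show False using hitP[OF Qk[OF qq(1)]] qq(3) by simp
        qed
      qed
    qed
    then have "card Q \<le> card (UNIV :: 'n set)" by (rule card_inj_on_le) auto
    then show ?thesis by (simp add: Q_def)
  qed
  define S where "S = {\<rho>. \<rho> > 0 \<and> (\<exists>z\<in>circuits A. ratio c z = \<rho>)}"
  have finS: "finite S" unfolding S_def by (rule finite_pos_ratios)
  define J where "J \<rho> = {j. j < k \<and> r j = \<rho>}" for \<rho>
  have cardJ: "card (J \<rho>) \<le> CARD('n)" for \<rho>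
  proof (cases "J \<rho> = {}")
    case True then show ?thesis by simp
  next
    case False
    have finJ: "finite (J \<rho>)" by (simp add: J_def)
    define a where "a = Min (J \<rho>)"
    define bb where "bb = Max (J \<rho>)"
    have aJ: "a \<in> J \<rho>" using finJ False by (simp add: a_def)
    have bJ: "bb \<in> J \<rho>" using finJ False by (simp add: bb_def)
    have sub: "J \<rho> \<subseteq> {a..<Suc bb}" using finJ by (auto simp: a_def bb_def le_imp_less_Suc)
    have ab: "a \<le> bb" using sub bJ by auto
    have "\<forall>j\<in>{a..<a + (Suc bb - a)}. r j = \<rho>"
    proof
      fix j assume "j \<in> {a..<a + (Suc bb - a)}"
      then have j: "a \<le> j" "j \<le> bb" using ab by auto
      have bk: "bb < k" using bJ by (simp add: J_def)
      have "r bb \<le> r j" using chain[of j bb] j bk by simp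
      moreover have "r j \<le> r a" using chain[of a j] j bk by simp
      ultimately show "r j = \<rho>" using aJ bJ by (simp add: J_def)
    qed
    moreover have "a + (Suc bb - a) \<le> k" using bJ ab by (simp add: J_def)
    ultimately have "Suc bb - a \<le> CARD('n)" using run by blast
    moreover have "card (J \<rho>) \<le> card {a..<Suc bb}" using sub by (intro card_mono) auto
    ultimately show ?thesis by simp
  qed
  have "{..<k} \<subseteq> (\<Union>\<rho>\<in>S. J \<rho>)"
  proof
    fix j assume "j \<in> {..<k}"
    then have j: "j < k" by simp
    then have "r j \<in> S" using RP[OF j] CZ[OF j] by (auto simp: S_def r_def)
    then show "j \<in> (\<Union>\<rho>\<in>S. J \<rho>)" using j by (auto simp: J_def)
  qed
  then have "k \<le> card (\<Union>\<rho>\<in>S. J \<rho>)"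
    by (metis card_lessThan card_mono finS finite_UN_I finite_Collect_conjI finite_lessThan J_def
        finite_nat_set_iff_bounded lessThan_iff mem_Collect_eq)
  also have "\<dots> \<le> (\<Sum>\<rho>\<in>S. card (J \<rho>))" by (rule card_UN_le[OF finS])
  also have "\<dots> \<le> (\<Sum>\<rho>\<in>S. CARD('n))" by (rule sum_mono) (rule cardJ)
  also have "\<dots> = CARD('n) * num_pos_ratios A c" by (simp add: num_pos_ratios_def S_def)
  finally have part1: "k \<le> CARD('n) * num_pos_ratios A c" .
  have part2: "optimal A b c u (xs k)" if st: "sd_stops A b c u (xs k)"
  proof -
    have fk: "feasible A b u (xs k)" using feas by simp
    have "cost c (xs k) \<le> cost c y" if y: "feasible A b u y" for y
    proof (rule ccontr)
      assume "\<not> ?thesis"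
      then have "- cost c (y - xs k) > 0 * l1norm (y - xs k)" by (simp add: cost_diff)
      then obtain h where "h \<in> feas_dirs A b u (xs k)" "ratio c h > 0"
        using better_dir[OF fk y, of 0 c] by auto
      then show False using st by (auto simp: sd_stops_def)
    qed
    then show ?thesis using fk by (simp add: optimal_def)
  qed
  show ?thesis using part1 part2 by blast
qed

end
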